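(* Let $S_\omega$ be the group of all permutations of $\omega$ and let $\mathcal{E}$ be the coarse structure on $\omega$ with base $\{E_H: H\subseteq S_\omega \text{ finite}, \ \mathrm{id}\in H\}$, where $E_H=\{(x,y): y\in Hx\}$. Then $(\omega,\mathcal{E})$ is extremely normal (every infinite subset of $\omega$ is large), $\mathcal{E}$ is strictly contained in $\mathfrak{M}_\omega$, and $(\omega,\mathcal{E})$ is not maximal.
   Context: A ballean $(X,\mathcal{E})$ is a set with a coarse structure. $E[x]=\{y:(x,y)\in E\}$, $E[A]=\bigcup_{a\in A}E[a]$. $Y$ is bounded if $Y\subseteq E[x]$ for some $x$ and $E\in\mathcal{E}$. $A$ is large if $X=E[A]$ for some $E$. An unbounded ballean is extremely normal if every unbounded subset is large, and maximal if $X$ is bounded in every coarse structure strictly containing $\mathcal{E}$. $\mathfrak{M}_\omega$ is the coarse structure on $\omega$ with base $\{M_{\mathcal{P}}:\mathcal{P}\in\mathfrak{F}\}$, where $\mathfrak{F}$ is the family of coverings $\mathcal{P}$ of $\omega$ such that every $P\in\mathcal{P}$ is finite and for every $x\in\omega$ the set $\bigcup\{P'\in\mathcal{P}: x\in P'\}$ is finite, and $M_{\mathcal{P}}=\{(x,y): x,y\in P \text{ for some } P\in\mathcal{P}\}$. *)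

theory Defs
  imports Main
begin

definition coarse_structure :: "'a set \<Rightarrow> ('a \<times> 'a) set set \<Rightarrow> bool" where
  "coarse_structure X \<E> \<longleftrightarrow>
     Id_on X \<in> \<E> \<and>
     (\<forall>E\<in>\<E>. Id_on X \<subseteq> E \<and> E \<subseteq> X \<times> X) \<and>
     (\<forall>E\<in>\<E>. \<forall>F\<in>\<E>. E \<union> F \<in> \<E> \<and> E O F \<in> \<E>) \<and>
     (\<forall>E\<in>\<E>. E\<inverse> \<in> \<E>) \<and>
     (\<forall>E\<in>\<E>. \<forall>F. Id_on X \<subseteq> F \<and> F \<subseteq> E \<longrightarrow> F \<in> \<E>)"

definition coarse_with_base :: "'a set \<Rightarrow> ('a \<times> 'a) set set \<Rightarrow> ('a \<times> 'a) set set" where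
  "coarse_with_base X \<B> = {E. Id_on X \<subseteq> E \<and> (\<exists>B\<in>\<B>. E \<subseteq> B)}"

definition bounded_in :: "'a set \<Rightarrow> ('a \<times> 'a) set set \<Rightarrow> 'a set \<Rightarrow> bool" where
  "bounded_in X \<E> Y \<longleftrightarrow> (\<exists>x\<in>X. \<exists>E\<in>\<E>. Y \<subseteq> E `` {x})"

definition large_in :: "'a set \<Rightarrow> ('a \<times> 'a) set set \<Rightarrow> 'a set \<Rightarrow> bool" where
  "large_in X \<E> A \<longleftrightarrow> (\<exists>E\<in>\<E>. X = E `` A)"

definition extremely_normal :: "'a set \<Rightarrow> ('a \<times> 'a) set set \<Rightarrow> bool" where
  "extremely_normal X \<E> \<longleftrightarrow>
     \<not> bounded_in X \<E> X \<and> (\<forall>Y. Y \<subseteq> X \<and> \<not> bounded_in X \<E> Y \<longrightarrow> large_in X \<E> Y)"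

definition maximal_ballean :: "'a set \<Rightarrow> ('a \<times> 'a) set set \<Rightarrow> bool" where
  "maximal_ballean X \<E> \<longleftrightarrow>
     \<not> bounded_in X \<E> X \<and>
     (\<forall>\<E>'. coarse_structure X \<E>' \<and> \<E> \<subset> \<E>' \<longrightarrow> bounded_in X \<E>' X)"

definition admissible_coverings :: "nat set set set" where
  "admissible_coverings = {\<P>. \<Union>\<P> = UNIV \<and> (\<forall>P\<in>\<P>. finite P) \<and>
       (\<forall>x. finite (\<Union>{P'\<in>\<P>. x \<in> P'}))}"

definition M_cov :: "nat set set \<Rightarrow> (nat \<times> nat) set" where
  "M_cov \<P> = {(x, y). \<exists>P\<in>\<P>. x \<in> P \<and> y \<in> P}"

definition M_omega :: "(nat \<times> nat) set set" where
  "M_omega = coarse_with_base UNIV (M_cov ` admissible_coverings)"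

definition E_perm :: "(nat \<Rightarrow> nat) set \<Rightarrow> (nat \<times> nat) set" where
  "E_perm H = {(x, y). \<exists>h\<in>H. y = h x}"

definition perm_coarse :: "(nat \<times> nat) set set" where
  "perm_coarse = coarse_with_base UNIV
     {E_perm H | H. finite H \<and> H \<subseteq> {\<sigma>. bij \<sigma>} \<and> id \<in> H}"

end

theory Submission
  imports Defs "HOL-Library.Nat_Bijection" "HOL-Library.Countable_Set"
begin

lemma IdU: "Id_on UNIV = Id" by auto

lemma pc_iff: "E \<in> perm_coarse \<longleftrightarrow> Id \<subseteq> E \<and>
   (\<exists>H. finite H \<and> H \<subseteq> {\<sigma>. bij \<sigma>} \<and> id \<in> H \<and> E \<subseteq> E_perm H)"
  unfolding perm_coarse_def coarse_with_base_def IdU by blast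

lemma E_perm_Id: "id \<in> H \<Longrightarrow> Id \<subseteq> E_perm H"
  unfolding E_perm_def by (clarsimp, metis id_apply)

lemma E_perm_mono: "H \<subseteq> H' \<Longrightarrow> E_perm H \<subseteq> E_perm H'"
  unfolding E_perm_def by blast

lemma E_perm_in: "finite H \<Longrightarrow> H \<subseteq> {\<sigma>. bij \<sigma>} \<Longrightarrow> id \<in> H \<Longrightarrow> E_perm H \<in> perm_coarse"
  using pc_iff E_perm_Id by blast

lemma coarse_pc: "coarse_structure UNIV perm_coarse"
  unfolding coarse_structure_def IdU
proof (intro conjI)
  show "Id \<in> perm_coarse"
  proof -
    have "E_perm {id} = Id" unfolding E_perm_def by auto
    moreover have "E_perm {id} \<in> perm_coarse" by (rule E_perm_in) auto
    ultimately show ?thesis by simp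
  qed
next
  show "\<forall>E\<in>perm_coarse. Id \<subseteq> E \<and> E \<subseteq> UNIV \<times> UNIV" by (simp add: pc_iff)
next
  show "\<forall>E\<in>perm_coarse. \<forall>F\<in>perm_coarse. E \<union> F \<in> perm_coarse \<and> E O F \<in> perm_coarse"
  proof (intro ballI)
  fix E F assume E: "E \<in> perm_coarse" and F: "F \<in> perm_coarse"
  from E[unfolded pc_iff] obtain H1 where H1: "finite H1" "H1 \<subseteq> {\<sigma>. bij \<sigma>}" "id \<in> H1" "E \<subseteq> E_perm H1" "Id \<subseteq> E"
    by blast
  from F[unfolded pc_iff] obtain H2 where H2: "finite H2" "H2 \<subseteq> {\<sigma>. bij \<sigma>}" "id \<in> H2" "F \<subseteq> E_perm H2" "Id \<subseteq> F"
    by blast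
  have U: "E \<union> F \<subseteq> E_perm (H1 \<union> H2)"
    using H1(4) H2(4) E_perm_mono[of H1 "H1 \<union> H2"] E_perm_mono[of H2 "H1 \<union> H2"] by blast
  have "E \<union> F \<in> perm_coarse"
    unfolding pc_iff
    apply (rule conjI)
    using H1(5) apply blast
    apply (rule exI[of _ "H1 \<union> H2"])
    using H1(1,2,3) H2(1,2) U by simp
  moreover
  let ?H = "(\<lambda>(h1,h2). h2 \<circ> h1) ` (H1 \<times> H2)"
  have C: "E O F \<subseteq> E_perm ?H"
  proof
    fix p assume "p \<in> E O F"
    then obtain x y z where p: "p = (x,z)" "(x,y) \<in> E" "(y,z) \<in> F" by blast
    obtain h1 where h1: "h1 \<in> H1" "y = h1 x" using H1(4) p(2) unfolding E_perm_def by blast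
    obtain h2 where h2: "h2 \<in> H2" "z = h2 y" using H2(4) p(3) unfolding E_perm_def by blast
    have "h2 \<circ> h1 \<in> ?H" using h1 h2 by auto
    moreover have "z = (h2 \<circ> h1) x" using h1 h2 by simp
    ultimately show "p \<in> E_perm ?H" unfolding E_perm_def p by blast
  qed
  have fin: "finite ?H" using H1(1) H2(1) by simp
  have bj: "?H \<subseteq> {\<sigma>. bij \<sigma>}" using H1(2) H2(2) by (auto intro: bij_comp)
  have idH: "id \<in> ?H" using H1(3) H2(3) by (auto intro!: image_eqI[where x="(id,id)"])
  have IdC: "Id \<subseteq> E O F" using H1(5) H2(5) by blast
  have "E O F \<in> perm_coarse"
    unfolding pc_iff using fin bj idH IdC C by blast
  ultimately show "E \<union> F \<in> perm_coarse \<and> E O F \<in> perm_coarse" by blast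
  qed
next
  show "\<forall>E\<in>perm_coarse. E\<inverse> \<in> perm_coarse"
  proof
  fix E assume E: "E \<in> perm_coarse"
  from E[unfolded pc_iff] obtain H where H: "finite H" "H \<subseteq> {\<sigma>. bij \<sigma>}" "id \<in> H" "E \<subseteq> E_perm H" "Id \<subseteq> E"
    by blast
  show "E\<inverse> \<in> perm_coarse"
    unfolding pc_iff
  proof (intro conjI exI)
    show "E\<inverse> \<subseteq> E_perm (inv ` H)"
    proof
      fix p assume "p \<in> E\<inverse>"
      then obtain x y where p: "p = (y,x)" "(x,y) \<in> E" by blast
      then obtain h where h: "h \<in> H" "y = h x" using H unfolding E_perm_def by blast
      moreover have "bij h" using H h by blast
      ultimately have "x = inv h y" by (simp add: bij_is_inj)
      thus "p \<in> E_perm (inv ` H)" unfolding E_perm_def p using h by blast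
    qed
    show "inv ` H \<subseteq> {\<sigma>. bij \<sigma>}" using H by (auto intro: bij_imp_bij_inv)
    show "id \<in> inv ` H" using H by (metis image_eqI inv_id)
  qed (use H in auto)
  qed
next
  show "\<forall>E\<in>perm_coarse. \<forall>F. Id \<subseteq> F \<and> F \<subseteq> E \<longrightarrow> F \<in> perm_coarse"
  proof (intro ballI allI impI)
    fix E F assume E: "E \<in> perm_coarse" and F: "Id \<subseteq> F \<and> F \<subseteq> E"
    from E[unfolded pc_iff] obtain H where H: "finite H" "H \<subseteq> {\<sigma>. bij \<sigma>}" "id \<in> H" "E \<subseteq> E_perm H"
      by blast
    have "F \<subseteq> E_perm H" using H(4) F by (meson subset_trans)
    thus "F \<in> perm_coarse" unfolding pc_iff using H F by (intro conjI exI[of _ H]) auto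
  qed
qed


lemma ball_fin:
  assumes "E \<in> perm_coarse"
  shows "finite (E``{x}) \<and> finite (E\<inverse>``{x})"
proof -
  from assms[unfolded pc_iff] obtain H where H: "finite H" "H \<subseteq> {\<sigma>. bij \<sigma>}" "id \<in> H" "E \<subseteq> E_perm H"
    by blast
  have "E``{x} \<subseteq> (\<lambda>h. h x) ` H"
  proof
    fix y assume "y \<in> E``{x}"
    hence "(x,y) \<in> E_perm H" using H(4) by blast
    thus "y \<in> (\<lambda>h. h x) ` H" unfolding E_perm_def by blast
  qed
  moreover have "E\<inverse>``{x} \<subseteq> (\<lambda>h. inv h x) ` H"
  proof
    fix y assume "y \<in> E\<inverse>``{x}"
    hence "(y,x) \<in> E_perm H" using H(4) by blast
    then obtain h where h: "h \<in> H" "x = h y" unfolding E_perm_def by blast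
    hence "bij h" using H(2) by blast
    hence "y = inv h x" using h by (simp add: bij_is_inj)
    thus "y \<in> (\<lambda>h. inv h x) ` H" using h by blast
  qed
  ultimately show ?thesis using H(1) by (meson finite_imageI finite_subset)
qed

lemma UNIV_unb: "\<not> bounded_in (UNIV::nat set) perm_coarse UNIV"
proof
  assume "bounded_in (UNIV::nat set) perm_coarse UNIV"
  then obtain x E where "E \<in> perm_coarse" "UNIV \<subseteq> E``{x}" unfolding bounded_in_def by blast
  thus False using ball_fin[of E x] by (meson finite_subset infinite_UNIV_nat)
qed

definition sw :: "nat \<Rightarrow> nat \<Rightarrow> nat \<Rightarrow> nat" where
  "sw a b = (\<lambda>x. if x = a then b else if x = b then a else x)"

lemma sw_bij: "bij (sw a b)"
proof -
  have h: "sw a b \<circ> sw a b = id" unfolding sw_def by (rule ext) auto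
  show ?thesis by (rule o_bij[OF h h])
qed

lemma fin_bdd:
  assumes "finite Y"
  shows "bounded_in (UNIV::nat set) perm_coarse Y"
proof (cases "Y = {}")
  case True
  have "Id \<in> perm_coarse" using coarse_pc unfolding coarse_structure_def IdU by (rule conjunct1)
  thus ?thesis unfolding bounded_in_def using True by blast
next
  case False
  then obtain y0 where y0: "y0 \<in> Y" by blast
  let ?H = "insert id ((\<lambda>y. sw y0 y) ` Y)"
  have "E_perm ?H \<in> perm_coarse" by (rule E_perm_in) (use assms sw_bij in auto)
  moreover have "Y \<subseteq> E_perm ?H `` {y0}"
  proof
    fix y assume "y \<in> Y"
    hence "sw y0 y \<in> ?H" by blast
    moreover have "y = sw y0 y y0" unfolding sw_def by simp
    ultimately show "y \<in> E_perm ?H `` {y0}" unfolding E_perm_def by blast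
  qed
  ultimately show ?thesis unfolding bounded_in_def by blast
qed

lemma swapset:
  fixes b :: "nat \<Rightarrow> nat"
  assumes "A \<inter> B = {}" "bij_betw b A B"
  shows "\<exists>g. bij g \<and> B \<subseteq> g ` A"
proof -
  define g where "g x = (if x \<in> A then b x else if x \<in> B then inv_into A b x else x)" for x
  have bA: "b ` A = B" using assms(2) by (simp add: bij_betw_def)
  have injb: "inj_on b A" using assms(2) by (simp add: bij_betw_def)
  have "g (g x) = x" for x
  proof (cases "x \<in> A")
    case True
    hence "b x \<in> B" using bA by blast
    hence "b x \<notin> A" using assms(1) by blast
    thus ?thesis using True \<open>b x \<in> B\<close> injb unfolding g_def by simp
  next
    case nA: False
    show ?thesis
    proof (cases "x \<in> B")
      case True
      hence "inv_into A b x \<in> A" using bA by (metis inv_into_into)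
      moreover have "b (inv_into A b x) = x" using True bA by (metis f_inv_into_f)
      ultimately show ?thesis using True nA unfolding g_def by simp
    next
      case False
      thus ?thesis using nA unfolding g_def by simp
    qed
  qed
  hence gg: "g \<circ> g = id" by (simp add: fun_eq_iff)
  have "bij g" by (rule o_bij[OF gg gg])
  moreover have "B \<subseteq> g ` A"
  proof
    fix y assume "y \<in> B"
    then obtain a where "a \<in> A" "y = b a" using bA by blast
    thus "y \<in> g ` A" unfolding g_def by auto
  qed
  ultimately show ?thesis by blast
qed

lemma inf_large:
  assumes "infinite (Y::nat set)"
  shows "large_in UNIV perm_coarse Y"
proof -
  define Z where "Z = - Y"
  have "\<exists>A b. A \<subseteq> Y \<and> bij_betw b A Z"
  proof (cases "finite Z")
    case True
    obtain A where A: "finite A" "card A = card Z" "A \<subseteq> Y"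
      using infinite_arbitrarily_large[OF assms] by blast
    then obtain b where "bij_betw b A Z" using finite_same_card_bij True by blast
    thus ?thesis using A by blast
  next
    case False
    obtain e1 :: "nat \<Rightarrow> nat" where e1: "bij_betw e1 Y UNIV"
      using countableE_infinite[of Y] assms by blast
    obtain e2 :: "nat \<Rightarrow> nat" where e2: "bij_betw e2 Z UNIV"
      using countableE_infinite[of Z] False by blast
    have "bij_betw (inv_into Z e2 \<circ> e1) Y Z"
      using e1 bij_betw_inv_into[OF e2] by (rule bij_betw_trans)
    thus ?thesis by blast
  qed
  then obtain A b where Ab: "A \<subseteq> Y" "bij_betw b A Z" by blast
  have "A \<inter> Z = {}" using Ab(1) unfolding Z_def by blast
  then obtain g where g: "bij g" "Z \<subseteq> g ` A" using swapset Ab(2) by blast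
  let ?H = "{id, g}"
  have "E_perm ?H \<in> perm_coarse" by (rule E_perm_in) (use g in auto)
  moreover have "UNIV = E_perm ?H `` Y"
  proof -
    have "x \<in> E_perm ?H `` Y" for x
    proof (cases "x \<in> Y")
      case True
      thus ?thesis unfolding E_perm_def by force
    next
      case False
      hence "x \<in> Z" unfolding Z_def by blast
      then obtain a where "a \<in> A" "x = g a" using g by blast
      thus ?thesis using Ab(1) unfolding E_perm_def by blast
    qed
    thus ?thesis by blast
  qed
  ultimately show ?thesis unfolding large_in_def by blast
qed

lemma ext_normal: "extremely_normal (UNIV :: nat set) perm_coarse"
  unfolding extremely_normal_def using UNIV_unb fin_bdd inf_large by metis


lemma pc_sub_M: "perm_coarse \<subseteq> M_omega"
proof
  fix E assume E: "E \<in> perm_coarse"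
  from E[unfolded pc_iff] obtain H where H: "finite H" "H \<subseteq> {\<sigma>. bij \<sigma>}" "id \<in> H" "E \<subseteq> E_perm H" "Id \<subseteq> E"
    by blast
  define Q where "Q x = (\<lambda>h. h x) ` H" for x :: nat
  define P where "P = range Q"
  have xQ: "x \<in> Q x" for x unfolding Q_def using H(3) by (metis id_apply image_eqI)
  have "P \<in> admissible_coverings"
    unfolding admissible_coverings_def
  proof (intro CollectI conjI allI ballI)
    show "\<Union>P = UNIV" unfolding P_def using xQ by blast
    show "finite p" if "p \<in> P" for p using that H(1) unfolding P_def Q_def by auto
    fix z
    have sub: "{P' \<in> P. z \<in> P'} \<subseteq> Q ` ((\<lambda>h. inv h z) ` H)"
    proof
      fix p assume "p \<in> {P' \<in> P. z \<in> P'}"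
      then obtain x where x: "p = Q x" "z \<in> Q x" unfolding P_def by blast
      then obtain h where h: "h \<in> H" "z = h x" unfolding Q_def by blast
      hence "bij h" using H(2) by blast
      hence "x = inv h z" using h by (simp add: bij_is_inj)
      thus "p \<in> Q ` ((\<lambda>h. inv h z) ` H)" using x h by blast
    qed
    have "finite (Q ` ((\<lambda>h. inv h z) ` H))" using H(1) by simp
    hence "finite {P' \<in> P. z \<in> P'}" using sub finite_subset by blast
    moreover have "\<forall>p\<in>{P' \<in> P. z \<in> P'}. finite p" unfolding P_def Q_def using H(1) by auto
    ultimately show "finite (\<Union>{P' \<in> P. z \<in> P'})" by (intro finite_Union) auto
  qed
  moreover have "E \<subseteq> M_cov P"
  proof
    fix p assume "p \<in> E"
    then obtain x y where p: "p = (x,y)" "(x,y) \<in> E_perm H" using H(4) by (metis subsetD surj_pair)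
    then obtain h where "h \<in> H" "y = h x" unfolding E_perm_def by blast
    hence "x \<in> Q x" "y \<in> Q x" using xQ unfolding Q_def by auto
    thus "p \<in> M_cov P" unfolding M_cov_def P_def p by blast
  qed
  ultimately show "E \<in> M_omega" unfolding M_omega_def coarse_with_base_def IdU using H(5) by blast
qed

definition fib :: "nat \<Rightarrow> nat" where
  "fib k = fst (prod_decode k) + snd (prod_decode k)"

lemma fib_finite: "finite (fib -` {n})"
proof -
  have "fib -` {n} \<subseteq> prod_encode ` ({..n} \<times> {..n})"
  proof
    fix k assume k: "k \<in> fib -` {n}"
    obtain a b where ab: "prod_decode k = (a,b)" by (cases "prod_decode k")
    have "fib k = n" using k by simp
    hence "a + b = n" unfolding fib_def ab by simp
    hence "(a,b) \<in> {..n} \<times> {..n}" by simp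
    hence "prod_encode (prod_decode k) \<in> prod_encode ` ({..n} \<times> {..n})" unfolding ab by (rule imageI)
    thus "k \<in> prod_encode ` ({..n} \<times> {..n})" by (simp only: prod_decode_inverse)
  qed
  thus ?thesis by (rule finite_subset) simp
qed

lemma fib_card: "n + 1 \<le> card (fib -` {n})"
proof -
  let ?f = "\<lambda>a. prod_encode (a, n - a)"
  have "?f ` {..n} \<subseteq> fib -` {n}"
  proof
    fix k assume "k \<in> ?f ` {..n}"
    then obtain a where a: "a \<le> n" "k = ?f a" by blast
    hence pd: "prod_decode k = (a, n - a)" by (simp only: prod_encode_inverse)
    have "fib k = n" unfolding fib_def pd using a(1) by simp
    thus "k \<in> fib -` {n}" by simp
  qed
  moreover have "inj_on ?f {..n}"
  proof
    fix a c assume "a \<in> {..n}" "c \<in> {..n}" and eq: "?f a = ?f c"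
    from eq have "prod_decode (?f a) = prod_decode (?f c)" by (rule arg_cong)
    hence "(a, n - a) = (c, n - c)" by (simp only: prod_encode_inverse)
    thus "a = c" by simp
  qed
  hence "card (?f ` {..n}) = n + 1" by (simp add: card_image)
  ultimately show ?thesis using card_mono[OF fib_finite] by metis
qed

definition W :: "(nat \<times> nat) set" where "W = {(x,y). fib x = fib y}"

lemma W_img: "W``{x} = fib -` {fib x}" unfolding W_def by auto

lemma W_M: "W \<in> M_omega"
proof -
  define P where "P = range (\<lambda>n. fib -` {n})"
  have loc: "{P' \<in> P. x \<in> P'} = {fib -` {fib x}}" for x
  proof
    show "{P' \<in> P. x \<in> P'} \<subseteq> {fib -` {fib x}}" unfolding P_def by blast
    show "{fib -` {fib x}} \<subseteq> {P' \<in> P. x \<in> P'}" unfolding P_def by blast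
  qed
  have cov: "\<Union>P = UNIV"
  proof -
    have "x \<in> \<Union>P" for x using loc[of x] by blast
    thus ?thesis by blast
  qed
  have fp: "\<forall>p\<in>P. finite p" unfolding P_def using fib_finite by blast
  have lf: "\<forall>x. finite (\<Union>{P' \<in> P. x \<in> P'})" unfolding loc using fib_finite by simp
  have adm: "P \<in> admissible_coverings"
    unfolding admissible_coverings_def using cov fp lf by (intro CollectI conjI)
  have sub: "W \<subseteq> M_cov P"
  proof
    fix p assume "p \<in> W"
    then obtain x y where p: "p = (x,y)" "fib x = fib y" unfolding W_def by blast
    have "fib -` {fib x} \<in> P" unfolding P_def by blast
    moreover have "x \<in> fib -` {fib x}" "y \<in> fib -` {fib x}" using p(2) by auto
    ultimately show "p \<in> M_cov P" unfolding M_cov_def p by blast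
  qed
  have "Id \<subseteq> W" unfolding W_def by auto
  moreover have "M_cov P \<in> M_cov ` admissible_coverings" using adm by (rule imageI)
  ultimately show ?thesis unfolding M_omega_def coarse_with_base_def IdU using sub by blast
qed

lemma W_not_pc: "W \<notin> perm_coarse"
proof
  assume "W \<in> perm_coarse"
  from this[unfolded pc_iff] obtain H where H: "finite H" "W \<subseteq> E_perm H" by blast
  define n where "n = card H"
  define x where "x = prod_encode (0, n)"
  have fx: "fib x = n" unfolding x_def fib_def by (simp only: prod_encode_inverse fst_conv snd_conv add_0)
  have "fib -` {n} \<subseteq> (\<lambda>h. h x) ` H"
  proof
    fix y assume "y \<in> fib -` {n}"
    hence "(x,y) \<in> W" unfolding W_def using fx by simp
    hence "(x,y) \<in> E_perm H" using H(2) by blast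
    thus "y \<in> (\<lambda>h. h x) ` H" unfolding E_perm_def by blast
  qed
  hence "card (fib -` {n}) \<le> card ((\<lambda>h. h x) ` H)" using H(1) by (simp add: card_mono)
  also have "\<dots> \<le> n" unfolding n_def by (rule card_image_le[OF H(1)])
  finally show False using fib_card[of n] by simp
qed

definition LF :: "(nat \<times> nat) set set" where
  "LF = {E. Id \<subseteq> E \<and> (\<forall>x. finite (E``{x}) \<and> finite (E\<inverse>``{x}))}"

lemma fin_Image: "finite A \<Longrightarrow> (\<forall>x. finite (F``{x})) \<Longrightarrow> finite (F``A)"
  unfolding Image_eq_UN[of F A] by (rule finite_UN_I) blast+

lemma LF_I: "Id \<subseteq> E \<Longrightarrow> (\<And>x. finite (E``{x})) \<Longrightarrow> (\<And>x. finite (E\<inverse>``{x})) \<Longrightarrow> E \<in> LF"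
  unfolding LF_def by blast

lemma LF_D: "E \<in> LF \<Longrightarrow> Id \<subseteq> E \<and> (\<forall>x. finite (E``{x})) \<and> (\<forall>x. finite (E\<inverse>``{x}))"
  unfolding LF_def by blast

lemma LF_coarse: "coarse_structure UNIV LF"
  unfolding coarse_structure_def IdU
proof (intro conjI)
  show "Id \<in> LF" by (rule LF_I) auto
  show "\<forall>E\<in>LF. Id \<subseteq> E \<and> E \<subseteq> UNIV \<times> UNIV"
  proof
    fix E assume "E \<in> LF"
    thus "Id \<subseteq> E \<and> E \<subseteq> UNIV \<times> UNIV" using LF_D[of E] by simp
  qed
  show "\<forall>E\<in>LF. \<forall>F\<in>LF. E \<union> F \<in> LF \<and> E O F \<in> LF"
  proof (intro ballI conjI)
    fix E F assume E: "E \<in> LF" and F: "F \<in> LF"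
    note e = LF_D[OF E] and f = LF_D[OF F]
    show "E \<union> F \<in> LF"
    proof (rule LF_I)
      show "Id \<subseteq> E \<union> F" using e by blast
      show "finite ((E \<union> F)``{x})" for x unfolding Un_Image using e f by blast
      show "finite ((E \<union> F)\<inverse>``{x})" for x unfolding converse_Un Un_Image using e f by blast
    qed
    show "E O F \<in> LF"
    proof (rule LF_I)
      show "Id \<subseteq> E O F" using e f by blast
      show "finite ((E O F)``{x})" for x unfolding relcomp_Image
        using e f by (intro fin_Image) blast+
      show "finite ((E O F)\<inverse>``{x})" for x unfolding converse_relcomp relcomp_Image
        using e f by (intro fin_Image) blast+
    qed
  qed
  show "\<forall>E\<in>LF. E\<inverse> \<in> LF"
  proof
    fix E assume "E \<in> LF"
    note e = LF_D[OF this]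
    show "E\<inverse> \<in> LF"
    proof (rule LF_I)
      show "Id \<subseteq> E\<inverse>" using e by blast
      show "finite (E\<inverse>``{x})" for x using e by blast
      show "finite ((E\<inverse>)\<inverse>``{x})" for x using e by simp
    qed
  qed
  show "\<forall>E\<in>LF. \<forall>F. Id \<subseteq> F \<and> F \<subseteq> E \<longrightarrow> F \<in> LF"
  proof (intro ballI allI impI)
    fix E F assume E: "E \<in> LF" and F: "Id \<subseteq> F \<and> F \<subseteq> E"
    note e = LF_D[OF E]
    show "F \<in> LF"
    proof (rule LF_I)
      show "Id \<subseteq> F" using F by blast
      show "finite (F``{x})" for x
      proof -
        have "F``{x} \<subseteq> E``{x}" using F by blast
        moreover have "finite (E``{x})" using e by blast
        ultimately show ?thesis by (rule finite_subset)
      qed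
      show "finite (F\<inverse>``{x})" for x
      proof -
        have "F\<inverse>``{x} \<subseteq> E\<inverse>``{x}" using F by blast
        moreover have "finite (E\<inverse>``{x})" using e by blast
        ultimately show ?thesis by (rule finite_subset)
      qed
    qed
  qed
qed

lemma not_max: "\<not> maximal_ballean (UNIV :: nat set) perm_coarse"
proof -
  have sub: "perm_coarse \<subseteq> LF"
  proof
    fix E assume "E \<in> perm_coarse"
    hence "Id \<subseteq> E" unfolding pc_iff by blast
    thus "E \<in> LF" using ball_fin[OF \<open>E \<in> perm_coarse\<close>] by (intro LF_I) blast+
  qed
  have WW: "W\<inverse> = W" unfolding W_def by auto
  have "Id \<subseteq> W" unfolding W_def by auto
  hence "W \<in> LF" by (rule LF_I) (simp_all only: WW W_img fib_finite)
  hence strict: "perm_coarse \<subset> LF" using sub W_not_pc by blast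
  have "\<not> bounded_in UNIV LF UNIV"
  proof
    assume "bounded_in UNIV LF UNIV"
    then obtain x E where "E \<in> LF" and "UNIV \<subseteq> E``{x}" unfolding bounded_in_def by blast
    moreover have "finite (E``{x})" using LF_D[OF \<open>E \<in> LF\<close>] by blast
    ultimately show False by (meson finite_subset infinite_UNIV_nat)
  qed
  thus ?thesis unfolding maximal_ballean_def using LF_coarse strict by (meson order.refl)
qed

theorem mainTheorem8:
  shows "coarse_structure (UNIV :: nat set) perm_coarse \<and>
         extremely_normal (UNIV :: nat set) perm_coarse \<and>
         perm_coarse \<subset> M_omega \<and>
         \<not> maximal_ballean (UNIV :: nat set) perm_coarse"
proof -
  have "perm_coarse \<subset> M_omega" using pc_sub_M W_M W_not_pc by blast
  thus ?thesis using coarse_pc ext_normal not_max by simp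
qed

end
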